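(* Let $r\ge1$, $n$ be integers and let $\sigma:\mathbb{Z}_n\to\{0,1\}$ be a weakly stable configuration. Then every block $[i,j]\in B(\sigma)$ has length $|[i,j]|\le r$.
   Context: Cells are elements of $\mathbb{Z}_n$, arithmetic mod $n$; $[a,b]$ denotes the cyclic interval $a,\dots,b$. The majority rule with radius $r$: $\mathrm{maj}_r(\sigma)(i)=0$ if among the cells of $[i-r,i+r]$ strictly more have value $0$ than $1$ under $\sigma$, and $=1$ otherwise. $\sigma$ is temporally periodic if $\mathrm{maj}_r(\mathrm{maj}_r(\sigma))=\sigma$. For $\beta\in\{0,1\}$, $B^\beta(\sigma)$ is the set of cell intervals $[i,j]$ with $\sigma(k)=\beta$ for all $k\in[i,j]$ and $\sigma(i-1)=\sigma(j+1)=1-\beta$; $B(\sigma)=B^0(\sigma)\cup B^1(\sigma)$. A configuration is strongly stable if every block in $B(\sigma)$ has length at least $r+1$ (equivalently, it has the form $(0^{r+1}0^*+1^{r+1}1^* )^*$), and weakly stable if it is temporally periodic and not strongly stable. *)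

theory Defs
  imports Main
begin

text \<open>Configurations on Z_n: a function sigma :: int => bool, read modulo n
  (True = state 1, False = state 0). Cell i of Z_n has value sigma (i mod n).\<close>

definition cval :: "int \<Rightarrow> (int \<Rightarrow> bool) \<Rightarrow> int \<Rightarrow> bool" where
  "cval n \<sigma> i = \<sigma> (i mod n)"

definition ones_in :: "nat \<Rightarrow> int \<Rightarrow> (int \<Rightarrow> bool) \<Rightarrow> int \<Rightarrow> nat" where
  "ones_in r n \<sigma> i = card {k \<in> {- int r .. int r}. cval n \<sigma> (i + k)}"

definition zeros_in :: "nat \<Rightarrow> int \<Rightarrow> (int \<Rightarrow> bool) \<Rightarrow> int \<Rightarrow> nat" where
  "zeros_in r n \<sigma> i = card {k \<in> {- int r .. int r}. \<not> cval n \<sigma> (i + k)}"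

definition maj :: "nat \<Rightarrow> int \<Rightarrow> (int \<Rightarrow> bool) \<Rightarrow> (int \<Rightarrow> bool)" where
  "maj r n \<sigma> = (\<lambda>i. \<not> (zeros_in r n \<sigma> i > ones_in r n \<sigma> i))"

definition temporally_periodic :: "nat \<Rightarrow> int \<Rightarrow> (int \<Rightarrow> bool) \<Rightarrow> bool" where
  "temporally_periodic r n \<sigma> \<longleftrightarrow>
     (\<forall>i \<in> {0..<n}. cval n (maj r n (maj r n \<sigma>)) i = cval n \<sigma> i)"

definition cyc_interval :: "int \<Rightarrow> int \<Rightarrow> int \<Rightarrow> int set" where
  "cyc_interval n i j = {(i + t) mod n | t. 0 \<le> t \<and> t \<le> (j - i) mod n}"

definition cyc_len :: "int \<Rightarrow> int \<Rightarrow> int \<Rightarrow> int" where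
  "cyc_len n i j = (j - i) mod n + 1"

definition blocks_of :: "int \<Rightarrow> (int \<Rightarrow> bool) \<Rightarrow> bool \<Rightarrow> (int \<times> int) set" where
  "blocks_of n \<sigma> \<beta> = {(i, j). i \<in> {0..<n} \<and> j \<in> {0..<n} \<and>
       (\<forall>k \<in> cyc_interval n i j. cval n \<sigma> k = \<beta>) \<and>
       cval n \<sigma> (i - 1) = (\<not> \<beta>) \<and> cval n \<sigma> (j + 1) = (\<not> \<beta>)}"

definition blocks :: "int \<Rightarrow> (int \<Rightarrow> bool) \<Rightarrow> (int \<times> int) set" where
  "blocks n \<sigma> = blocks_of n \<sigma> False \<union> blocks_of n \<sigma> True"

definition strongly_stable :: "nat \<Rightarrow> int \<Rightarrow> (int \<Rightarrow> bool) \<Rightarrow> bool" where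
  "strongly_stable r n \<sigma> \<longleftrightarrow> (\<forall>(i, j) \<in> blocks n \<sigma>. cyc_len n i j \<ge> int r + 1)"

definition weakly_stable :: "nat \<Rightarrow> int \<Rightarrow> (int \<Rightarrow> bool) \<Rightarrow> bool" where
  "weakly_stable r n \<sigma> \<longleftrightarrow> temporally_periodic r n \<sigma> \<and> \<not> strongly_stable r n \<sigma>"

end

theory Submission
  imports Defs
begin

definition MM :: "nat \<Rightarrow> (int \<Rightarrow> bool) \<Rightarrow> int \<Rightarrow> bool" where
  "MM r F i = (\<not> (card {k \<in> {- int r .. int r}. \<not> F (i + k)} > card {k \<in> {- int r .. int r}. F (i + k)}))"

lemma maj_eq: "maj r n \<sigma> = MM r (cval n \<sigma>)"
  by (simp add: maj_def MM_def zeros_in_def ones_in_def fun_eq_iff cval_def)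

lemma cval_cval: "cval n (cval n \<sigma>) = cval n \<sigma>"
  by (simp add: cval_def fun_eq_iff)

lemma MM_periodic:
  "cval n (MM r (cval n \<sigma>)) = MM r (cval n \<sigma>)"
proof -
  have "\<And>i k. cval n \<sigma> (i mod n + k) = cval n \<sigma> (i + k)"
    by (simp add: cval_def mod_simps)
  then show ?thesis by (simp add: cval_def[of n "MM r _"] MM_def fun_eq_iff)
qed

lemma MM_card:
  assumes "S \<subseteq> {- int r .. int r}" "card S \<ge> r + 1" "\<forall>k\<in>S. F (i + k) = c"
  shows "MM r F i = c"
proof -
  define W where "W = {- int r .. int r}"
  define A where "A = {k \<in> W. F (i + k)}"
  define B where "B = {k \<in> W. \<not> F (i + k)}"
  have cw: "card W = 2 * r + 1" unfolding W_def by simp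
  have "A \<union> B = W" "A \<inter> B = {}" by (auto simp: A_def B_def W_def)
  have "finite A" by (rule finite_subset[of _ W]) (auto simp: A_def W_def)
  have "finite B" by (rule finite_subset[of _ W]) (auto simp: B_def W_def)
  hence "card A + card B = card W" using \<open>finite A\<close> \<open>A \<union> B = W\<close> \<open>A \<inter> B = {}\<close> by (metis card_Un_disjoint)
  hence ab: "card A + card B = 2 * r + 1" using cw by simp
  show ?thesis
  proof (cases c)
    case True
    hence "S \<subseteq> A" using assms unfolding A_def W_def by auto
    hence "card S \<le> card A" using \<open>finite A\<close> by (intro card_mono)
    thus ?thesis using ab assms(2) True unfolding MM_def by (simp add: A_def B_def W_def)
  next
    case False
    hence "S \<subseteq> B" using assms unfolding B_def W_def by auto
    hence "card S \<le> card B" using \<open>finite B\<close> by (intro card_mono)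
    thus ?thesis using ab assms(2) False unfolding MM_def by (simp add: A_def B_def W_def)
  qed
qed

lemma MM_run:
  assumes "\<forall>y\<in>{w..w + int r}. F y = c" "w \<le> i" "i \<le> w + int r"
  shows "MM r F i = c"
proof (rule MM_card[where S="{w - i .. w - i + int r}"])
  show "{w - i..w - i + int r} \<subseteq> {- int r..int r}" using assms by auto
  show "r + 1 \<le> card {w - i..w - i + int r}" by simp
  show "\<forall>k\<in>{w - i..w - i + int r}. F (i + k) = c" using assms(1) by auto
qed

lemma step:
  assumes per: "\<forall>x. MM r (MM r f) x = f x" and r: "r \<ge> 1"
    and left: "\<forall>x\<in>{x0 - int r - 1 .. x0 - 1}. f x = c" and x0: "f x0 = (\<not> c)"
  shows "\<forall>x\<in>{x0 .. x0 + int r}. f x = (\<not> c)"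
proof (rule ccontr)
  assume "\<not> ?thesis"
  then obtain y where y: "y \<in> {x0 .. x0 + int r}" "f y = c" by auto
  with x0 have yx: "y \<noteq> x0" by auto
  have g1: "MM r f x = c" if "x \<in> {x0 - int r - 1 .. x0 - 1}" for x
    using MM_run[of "x0 - int r - 1" r f c x] left that by auto
  have g2: "MM r f x0 = c"
  proof (rule MM_card[where S="insert (y - x0) {- int r .. -1}"])
    show "insert (y - x0) {- int r..- 1} \<subseteq> {- int r..int r}" using y by auto
    have "y - x0 \<notin> {- int r..- 1}" using y by auto
    then show "r + 1 \<le> card (insert (y - x0) {- int r..- 1})" by simp
    show "\<forall>k\<in>insert (y - x0) {- int r..- 1}. f (x0 + k) = c"
      using y left by auto
  qed
  have "\<forall>x\<in>{x0 - int r .. x0 - int r + int r}. MM r f x = c"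
  proof
    fix x assume "x \<in> {x0 - int r .. x0 - int r + int r}"
    then have "x = x0 \<or> x \<in> {x0 - int r - 1 .. x0 - 1}" by auto
    then show "MM r f x = c" using g1 g2 by auto
  qed
  hence "MM r (MM r f) x0 = c" using MM_run[of "x0 - int r" r "MM r f" c x0] by simp
  with per x0 show False by simp
qed

definition LR :: "(int \<Rightarrow> bool) \<Rightarrow> nat \<Rightarrow> int \<Rightarrow> bool" where
  "LR f r x = (\<exists>w. w \<le> x \<and> x \<le> w + int r \<and> (\<forall>y\<in>{w..w + int r}. f y = f x))"

lemma LR_intro:
  assumes "w \<le> x" "x \<le> w + int r" "\<forall>y\<in>{w..w + int r}. f y = f x"
  shows "LR f r x"
  unfolding LR_def using assms by (intro exI[of _ w] conjI)

lemma LR_step: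
  assumes per: "\<forall>x. MM r (MM r f) x = f x" and r: "r \<ge> 1" and h: "LR f r (x - 1)"
  shows "LR f r x"
proof -
  obtain w where W: "w \<le> x - 1 \<and> x - 1 \<le> w + int r \<and> (\<forall>y\<in>{w..w + int r}. f y = f (x - 1))"
    using h unfolding LR_def by (erule exE)
  have w1: "w \<le> x - 1" and w2: "x - 1 \<le> w + int r"
    and w3: "\<forall>y\<in>{w..w + int r}. f y = f (x - 1)" using W by (blast, blast, blast)
  show ?thesis
  proof (cases "x \<le> w + int r")
    case True
    then have xin: "x \<in> {w..w + int r}" using w1 by simp
    then have fx: "f x = f (x - 1)" using w3 by blast
    have "\<forall>y\<in>{w..w + int r}. f y = f x"
    proof
      fix y assume "y \<in> {w..w + int r}"
      then have "f y = f (x - 1)" using w3 by blast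
      then show "f y = f x" using fx by simp
    qed
    moreover have "w \<le> x" using w1 by simp
    ultimately show ?thesis using True by (intro LR_intro[of w])
  next
    case False
    then have wx: "w = x - 1 - int r" using w2 by simp
    show ?thesis
    proof (cases "f x = f (x - 1)")
      case True
      have "\<forall>y\<in>{x - int r..x - int r + int r}. f y = f x"
      proof
        fix y assume "y \<in> {x - int r..x - int r + int r}"
        then have "y = x \<or> y \<in> {w..w + int r}" using wx by auto
        then show "f y = f x"
        proof
          assume "y \<in> {w..w + int r}"
          then have "f y = f (x - 1)" using w3 by blast
          then show ?thesis using True by simp
        qed simp
      qed
      moreover have "x - int r \<le> x" "x \<le> x - int r + int r" by simp_all
      ultimately show ?thesis by (intro LR_intro)
    next
      case False
      have ww: "{x - int r - 1 .. x - 1} = {w..w + int r}" using wx by auto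
      have left: "\<forall>y\<in>{x - int r - 1 .. x - 1}. f y = f (x - 1)" unfolding ww by (rule w3)
      have st: "\<forall>y\<in>{x .. x + int r}. f y = (\<not> f (x - 1))"
        by (rule step[OF per r left]) (use False in blast)
      have "\<forall>y\<in>{x .. x + int r}. f y = f x"
      proof
        fix y assume "y \<in> {x .. x + int r}"
        then have "f y = (\<not> f (x - 1))" using st by blast
        then show "f y = f x" using False by blast
      qed
      moreover have "x \<le> x" "x \<le> x + int r" by simp_all
      ultimately show ?thesis by (intro LR_intro)
    qed
  qed
qed

lemma LR_all_nat:
  assumes per: "\<forall>x. MM r (MM r f) x = f x" and r: "r \<ge> 1" and h: "LR f r p"
  shows "LR f r (p + int k)"
proof (induction k)
  case 0 then show ?case using h by simp
next
  case (Suc k)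
  then show ?case using LR_step[OF per r, of "p + int (Suc k)"] by simp
qed

lemma LR_shift:
  assumes perf: "\<forall>y. f (y + n) = f y" and h: "LR f r (x + n * int t)"
  shows "LR f r x"
proof -
  have pt: "f (y + n * int t) = f y" for y
  proof (induction t)
    case 0 then show ?case by simp
  next
    case (Suc t)
    have "f (y + n * int (Suc t)) = f ((y + n * int t) + n)" by (simp add: algebra_simps)
    then show ?case using perf Suc by simp
  qed
  obtain w where W: "w \<le> x + n * int t \<and> x + n * int t \<le> w + int r \<and>
    (\<forall>y\<in>{w..w + int r}. f y = f (x + n * int t))"
    using h unfolding LR_def by (erule exE)
  then have w: "w \<le> x + n * int t" "x + n * int t \<le> w + int r"
    "\<forall>y\<in>{w..w + int r}. f y = f (x + n * int t)" by (blast, blast, blast)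
  have "\<forall>y\<in>{w - n * int t..w - n * int t + int r}. f y = f x"
  proof
    fix y assume "y \<in> {w - n * int t..w - n * int t + int r}"
    then have "y + n * int t \<in> {w..w + int r}" by auto
    then have "f (y + n * int t) = f (x + n * int t)" using w(3) by blast
    then show "f y = f x" by (simp only: pt)
  qed
  moreover have "w - n * int t \<le> x" "x \<le> w - n * int t + int r" using w(1,2) by simp_all
  ultimately show ?thesis by (intro LR_intro)
qed

theorem corollary1:
  fixes r :: nat and n :: int and \<sigma> :: "int \<Rightarrow> bool"
  assumes "r \<ge> 1" and "n \<ge> 1"
    and "weakly_stable r n \<sigma>"
  shows "\<forall>(i, j) \<in> blocks n \<sigma>. cyc_len n i j \<le> int r"
proof (rule ccontr)
  define f where "f = cval n \<sigma>"
  have perf: "\<forall>y. f (y + n) = f y" by (simp add: f_def cval_def)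
  have mm: "maj r n (maj r n \<sigma>) = MM r (MM r f)"
    by (simp add: maj_eq f_def MM_periodic)
  have perMM: "cval n (MM r (MM r f)) = MM r (MM r f)"
    by (metis MM_periodic f_def maj_eq)
  have per: "\<forall>x. MM r (MM r f) x = f x"
  proof
    fix x
    have "x mod n \<in> {0..<n}" using assms(2) by auto
    moreover have "temporally_periodic r n \<sigma>" using assms(3) unfolding weakly_stable_def by simp
    ultimately have "cval n (maj r n (maj r n \<sigma>)) (x mod n) = cval n \<sigma> (x mod n)"
      unfolding temporally_periodic_def by blast
    then have "cval n (MM r (MM r f)) (x mod n) = cval n \<sigma> (x mod n)" by (simp only: mm)
    then show "MM r (MM r f) x = f x"
      using perMM by (simp add: f_def cval_def fun_eq_iff)
  qed
  have fblock: "f (i + t) = \<beta>" if "(i, j) \<in> blocks_of n \<sigma> \<beta>" "0 \<le> t" "t \<le> (j - i) mod n"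
    for i j t \<beta>
  proof -
    have "(i + t) mod n \<in> cyc_interval n i j" unfolding cyc_interval_def using that(2,3) by blast
    then have "cval n \<sigma> ((i + t) mod n) = \<beta>" using that(1) unfolding blocks_of_def by auto
    then show ?thesis by (simp add: f_def cval_def)
  qed
  have fend: "f (i + (j - i) mod n + 1) = (\<not> \<beta>)" if "(i, j) \<in> blocks_of n \<sigma> \<beta>" for i j \<beta>
  proof -
    have "(i + (j - i) mod n + 1) mod n = ((i + 1) + (j - i) mod n) mod n" by (simp add: algebra_simps)
    also have "\<dots> = ((i + 1) + (j - i)) mod n" by (rule mod_add_right_eq)
    finally have "(i + (j - i) mod n + 1) mod n = (j + 1) mod n" by (simp add: add.commute)
    then show ?thesis using that unfolding blocks_of_def f_def cval_def by auto
  qed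
  have fstart: "f (i - 1) = (\<not> \<beta>)" if "(i, j) \<in> blocks_of n \<sigma> \<beta>" for i j \<beta>
    using that unfolding blocks_of_def f_def by auto
  assume "\<not> (\<forall>(i, j) \<in> blocks n \<sigma>. cyc_len n i j \<le> int r)"
  then obtain i j where ij: "(i, j) \<in> blocks n \<sigma>" "\<not> cyc_len n i j \<le> int r" by auto
  then obtain \<beta> where b: "(i, j) \<in> blocks_of n \<sigma> \<beta>" unfolding blocks_def by auto
  have long: "(j - i) mod n + 1 \<ge> int r + 1" using ij(2) unfolding cyc_len_def by simp
  have "\<forall>y\<in>{i..i + int r}. f y = f i"
  proof
    fix y assume "y \<in> {i..i + int r}"
    then have "f (i + (y - i)) = \<beta>" using fblock[OF b, of "y - i"] long by auto
    moreover have "0 \<le> (j - i) mod n" using assms(2) by simp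
    ultimately show "f y = f i" using fblock[OF b, of 0] by simp
  qed
  then have LRi: "LR f r i" by (rule LR_intro[rotated 2]) simp_all
  have LRall: "LR f r x" for x
  proof -
    have "x + n * int (nat (i - x)) \<ge> i"
    proof (cases "i \<le> x")
      case True then show ?thesis using assms(2) by simp
    next
      case False
      then have "n * (i - x) \<ge> 1 * (i - x)" using assms(2) by (intro mult_right_mono) auto
      moreover have "int (nat (i - x)) = i - x" using False by simp
      ultimately show ?thesis by simp
    qed
    define k where "k = nat (x + n * int (nat (i - x)) - i)"
    have keq: "i + int k = x + n * int (nat (i - x))" unfolding k_def using \<open>x + n * int (nat (i - x)) \<ge> i\<close> by simp
    have "LR f r (i + int k)" by (rule LR_all_nat[OF per assms(1) LRi])
    then have "LR f r (x + n * int (nat (i - x)))" using keq by simp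
    then show ?thesis by (rule LR_shift[OF perf])
  qed
  from assms(3) obtain i0 j0 where ij0: "(i0, j0) \<in> blocks n \<sigma>" "\<not> cyc_len n i0 j0 \<ge> int r + 1"
    unfolding weakly_stable_def strongly_stable_def by auto
  then obtain \<beta>0 where b0: "(i0, j0) \<in> blocks_of n \<sigma> \<beta>0" unfolding blocks_def by auto
  have short: "(j0 - i0) mod n + 1 < int r + 1" using ij0(2) unfolding cyc_len_def by simp
  obtain w where W: "w \<le> i0 \<and> i0 \<le> w + int r \<and> (\<forall>y\<in>{w..w + int r}. f y = f i0)"
    using LRall[of i0] unfolding LR_def by (erule exE)
  then have w: "w \<le> i0" "i0 \<le> w + int r" "\<forall>y\<in>{w..w + int r}. f y = f i0" by (blast, blast, blast)
  have fi0: "f i0 = \<beta>0" using fblock[OF b0, of 0] assms(2) by simp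
  have "w = i0"
  proof (rule ccontr)
    assume "w \<noteq> i0"
    then have "i0 - 1 \<in> {w..w + int r}" using w by auto
    then have "f (i0 - 1) = f i0" using w(3) by blast
    then show False using fi0 fstart[OF b0] by simp
  qed
  have "i0 + (j0 - i0) mod n + 1 \<in> {w..w + int r}"
  proof -
    have "0 \<le> (j0 - i0) mod n" using assms(2) by simp
    then show ?thesis using \<open>w = i0\<close> short by auto
  qed
  then have "f (i0 + (j0 - i0) mod n + 1) = f i0" using w(3) by blast
  then show False using fi0 fend[OF b0] by simp
qed

end
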